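(* Let $s \ge 0$ be a fixed real number and let $(k(n))_{n \ge 1}$ be a sequence of integers with $2 \le k(n) \le n$. Suppose there is a constant $\delta > 0$ such that $s \le \frac{1}{n}\log_2 \#F_{k(n)}^n - \delta$ for all sufficiently large $n$, where $\#F_k^n = \sum_{w=0}^{k}\binom{n}{w}$. Then $F_{k(n)}^n \wedge Q_s^n$ is satisfiable with high probability, i.e. $\lim_{n\to\infty}\Pr[F_{k(n)}^n \wedge Q_s^n \text{ is satisfiable}] = 1$.
   Context: For integers $0 \le k \le n$, $F_k^n$ denotes the at-most-$k$ cardinality constraint on $x \in \{0,1\}^n$ (satisfied iff the Hamming weight $|x| \le k$), with $\#F_k^n = \sum_{w=0}^{k}\binom{n}{w}$ satisfying assignments. For real $s \ge 0$, $Q_s^n$ is the random system $Ax = b$ over $\mathrm{GF}(2)$ with $\lceil sn\rceil$ equations, where all entries of $A \in \{0,1\}^{\lceil sn\rceil \times n}$ and $b \in \{0,1\}^{\lceil sn \rceil}$ are independent and uniform on $\{0,1\}$. $F_k^n \wedge Q_s^n$ is satisfiable iff some $x \in \{0,1\}^n$ has $|x| \le k$ and $Ax=b$; probability is over $(A,b)$. "With high probability" means with probability tending to $1$ as $n \to \infty$. *)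

theory Defs
  imports Complex_Main
begin

definition numF :: "nat \<Rightarrow> nat \<Rightarrow> nat" where
  "numF n k = (\<Sum>w=0..k. n choose w)"

definition hweight :: "bool list \<Rightarrow> nat" where
  "hweight x = length (filter id x)"

text \<open>A is a list of rows (each row a bool list), b a bool list;
  A x = b over GF(2): for every row i, the parity of the inner product equals b!i.\<close>
definition gf2_solves :: "bool list list \<Rightarrow> bool list \<Rightarrow> bool list \<Rightarrow> bool" where
  "gf2_solves A b x \<longleftrightarrow>
     (\<forall>i < length A. odd (card {j. j < length x \<and> A ! i ! j \<and> x ! j}) = b ! i)"

definition instances :: "nat \<Rightarrow> nat \<Rightarrow> (bool list list \<times> bool list) set" where
  "instances m n = {(A, b). length A = m \<and> (\<forall>r\<in>set A. length r = n) \<and> length b = m}"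

definition sat_inst :: "nat \<Rightarrow> nat \<Rightarrow> bool list list \<Rightarrow> bool list \<Rightarrow> bool" where
  "sat_inst n k A b \<longleftrightarrow> (\<exists>x. length x = n \<and> hweight x \<le> k \<and> gf2_solves A b x)"

text \<open>Probability, over uniform (A,b) with ceil(s n) equations, that F_k^n /\ Q_s^n is satisfiable.\<close>
definition prob_sat :: "real \<Rightarrow> nat \<Rightarrow> nat \<Rightarrow> real" where
  "prob_sat s n k =
     (let m = nat \<lceil>s * real n\<rceil> in
      real (card {(A, b) \<in> instances m n. sat_inst n k A b}) / real (card (instances m n)))"

end

theory Submission
  imports Defs
begin


lemma card_pairs_lists:
  assumes "finite B"
  shows "card {(A,b). length A = m \<and> length b = m \<and> (\<forall>i<m. (A!i, b!i) \<in> B)} = card B ^ m"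
proof -
  let ?f = "\<lambda>l. (map fst l, map snd l)"
  have eq: "{(A,b). length A = m \<and> length b = m \<and> (\<forall>i<m. (A!i, b!i) \<in> B)}
        = ?f ` {l. set l \<subseteq> B \<and> length l = m}"
  proof (intro equalityI subsetI)
    fix p assume "p \<in> {(A,b). length A = m \<and> length b = m \<and> (\<forall>i<m. (A!i, b!i) \<in> B)}"
    then obtain A b where p: "p = (A,b)" "length A = m" "length b = m" "\<forall>i<m. (A!i, b!i) \<in> B" by auto
    have "set (zip A b) \<subseteq> B" using p by (auto simp: set_zip)
    moreover have "?f (zip A b) = p" using p by simp
    ultimately show "p \<in> ?f ` {l. set l \<subseteq> B \<and> length l = m}" using p
      by (metis (mono_tags, lifting) image_eqI length_zip mem_Collect_eq min.idem)
  next
    fix p assume "p \<in> ?f ` {l. set l \<subseteq> B \<and> length l = m}"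
    then obtain l where "set l \<subseteq> B" "length l = m" "p = ?f l" by auto
    then show "p \<in> {(A,b). length A = m \<and> length b = m \<and> (\<forall>i<m. (A!i, b!i) \<in> B)}"
      by (auto simp: nth_mem subsetD)
  qed
  have inj: "inj ?f"
    by (intro injI) (metis zip_map_fst_snd prod.inject)
  show ?thesis unfolding eq
    by (subst card_image[OF inj_on_subset[OF inj]]) (auto simp: card_lists_length_eq assms)
qed

lemma card_bool_lists: "card {r::bool list. length r = n} = 2^n"
  using card_lists_length_eq[of "UNIV::bool set" n] by simp

lemma finite_bool_lists: "finite {r::bool list. length r = n}"
  using finite_lists_length_eq[of "UNIV::bool set" n] by simp

definition par :: "bool list \<Rightarrow> bool list \<Rightarrow> bool" where
  "par r x = odd (card {j. j < length x \<and> r!j \<and> x!j})"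

lemma gf2_par: "gf2_solves A b x \<longleftrightarrow> (\<forall>i<length A. par (A!i) x = b!i)"
  unfolding gf2_solves_def par_def by simp

lemma inst_level:
  "{p \<in> instances m n. \<forall>i<m. Q (fst p ! i) (snd p ! i)}
   = {(A,b). length A = m \<and> length b = m \<and> (\<forall>i<m. (A!i, b!i) \<in> {(r,c). length r = n \<and> Q r c})}"
  unfolding instances_def by (auto simp: all_set_conv_all_nth)

lemma card_inst_level:
  "card {p \<in> instances m n. \<forall>i<m. Q (fst p ! i) (snd p ! i)} = card {(r,c). length r = n \<and> Q r c} ^ m"
proof -
  have "finite {(r::bool list,c::bool). length r = n \<and> Q r c}"
    by (rule finite_subset[of _ "{r. length r = n} \<times> UNIV"]) (auto simp: finite_bool_lists)
  then show ?thesis unfolding inst_level by (rule card_pairs_lists)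
qed


lemma card_inst: "card (instances m n) = (2^(n+1))^m"
proof -
  have "card (instances m n) = card {p \<in> instances m n. \<forall>i<m. (\<lambda>r c. True) (fst p ! i) (snd p ! i)}" by simp
  also have "\<dots> = card {(r::bool list,c::bool). length r = n \<and> True} ^ m" by (rule card_inst_level)
  also have "{(r::bool list,c::bool). length r = n \<and> True} = {r. length r = n} \<times> UNIV" by auto
  finally show ?thesis by (simp add: card_cartesian_product card_bool_lists)
qed

lemma finite_inst: "finite (instances m n)"
  using card_inst[of m n] by (metis card_eq_0_iff power_not_zero zero_neq_numeral)

lemma card_sol1:
  assumes "length x = n"
  shows "card {p \<in> instances m n. gf2_solves (fst p) (snd p) x} = (2^n)^m"
proof -
  have "{p \<in> instances m n. gf2_solves (fst p) (snd p) x}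
      = {p \<in> instances m n. \<forall>i<m. (\<lambda>r c. par r x = c) (fst p ! i) (snd p ! i)}"
    by (auto simp: gf2_par instances_def)
  also have "card \<dots> = card {(r::bool list,c). length r = n \<and> par r x = c} ^ m" by (rule card_inst_level)
  also have "{(r::bool list,c). length r = n \<and> par r x = c} = (\<lambda>r. (r, par r x)) ` {r. length r = n}" by auto
  also have "card \<dots> = 2^n" by (subst card_image) (auto intro: inj_onI simp: card_bool_lists)
  finally show ?thesis .
qed

lemma par_flip:
  assumes "j < length x" "length r = length x"
  shows "par (r[j := \<not> r!j]) x = (par r x \<noteq> x!j)"
proof -
  let ?S = "{j'. j' < length x \<and> r!j' \<and> x!j'}"
  let ?T = "{j'. j' < length x \<and> r[j := \<not> r!j]!j' \<and> x!j'}"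
  have fin: "finite ?S" by simp
  show ?thesis
  proof (cases "x!j")
    case False
    then have "?T = ?S" using assms by (auto simp: nth_list_update)
    then show ?thesis using False by (simp add: par_def)
  next
    case True
    show ?thesis
    proof (cases "r!j")
      case r: True
      then have "?T = ?S - {j}" using assms by (auto simp: nth_list_update)
      moreover have "j \<in> ?S" using assms True r by auto
      ultimately have h: "card ?T + 1 = card ?S" using fin
        by (metis card_Diff1_less card_Suc_Diff1 Suc_eq_plus1)
      have "odd (card ?S) \<longleftrightarrow> \<not> odd (card ?T)" using h by presburger
      then show ?thesis using True by (simp add: par_def)
    next
      case r: False
      then have "?T = insert j ?S" using assms True by (auto simp: nth_list_update)
      moreover have "j \<notin> ?S" using r by auto
      ultimately have h: "card ?T = card ?S + 1" using fin by simp
      have "odd (card ?S) \<longleftrightarrow> \<not> odd (card ?T)" using h by presburger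
      then show ?thesis using True by (simp add: par_def)
    qed
  qed
qed

lemma half:
  assumes "length x = n" "length y = n" "x \<noteq> y"
  shows "card {r. length r = n \<and> par r x = par r y} = 2^(n-1)"
proof -
  have "\<exists>j<n. x!j \<noteq> y!j"
  proof (rule ccontr)
    assume "\<not> (\<exists>j<n. x!j \<noteq> y!j)"
    then have "x = y" using assms by (auto intro: nth_equalityI)
    with assms show False by simp
  qed
  then obtain j where j: "j < n" "x!j \<noteq> y!j" by blast
  define L where "L = {r::bool list. length r = n}"
  define E where "E = {r. length r = n \<and> par r x = par r y}"
  define Od where "Od = L - E"
  define f where "f r = r[j := \<not> r!j]" for r :: "bool list"
  have ff: "f (f r) = r" for r unfolding f_def
    by (cases "j < length r") (simp_all add: list_update_beyond)
  have flip: "r \<in> L \<Longrightarrow> (par (f r) x = par (f r) y) = (\<not> (par r x = par r y))" for r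
    unfolding f_def L_def using par_flip[of j x r] par_flip[of j y r] j assms by auto
  have finL: "finite L" unfolding L_def by (rule finite_bool_lists)
  have fL: "r \<in> L \<Longrightarrow> f r \<in> L" for r by (simp add: L_def f_def)
  have EL: "E \<subseteq> L" by (auto simp: E_def L_def)
  have inj: "inj f" by (metis ff injI)
  have "f ` E \<subseteq> Od" using flip fL EL by (auto simp: Od_def E_def L_def)
  then have c1: "card E \<le> card Od"
    using card_inj_on_le[of f E Od] inj finL by (simp add: Od_def inj_on_subset)
  have "f ` Od \<subseteq> E" using flip fL by (auto simp: Od_def E_def L_def)
  then have c2: "card Od \<le> card E"
    using card_inj_on_le[of f Od E] inj finL EL by (simp add: inj_on_subset finite_subset)
  have "card E + card Od = card L" unfolding Od_def using EL finL
    by (metis card_Diff_subset card_mono finite_subset le_add_diff_inverse)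
  then have "2 * card E = 2^n" using c1 c2 by (simp add: L_def card_bool_lists)
  moreover have "n > 0" using j by simp
  ultimately show ?thesis unfolding E_def
    by (metis Suc_diff_1 mult_left_cancel power_Suc zero_neq_numeral)
qed

lemma card_sol2:
  assumes "length x = n" "length y = n" "x \<noteq> y"
  shows "card {p \<in> instances m n. gf2_solves (fst p) (snd p) x \<and> gf2_solves (fst p) (snd p) y} = (2^(n-1))^m"
proof -
  have "{p \<in> instances m n. gf2_solves (fst p) (snd p) x \<and> gf2_solves (fst p) (snd p) y}
      = {p \<in> instances m n. \<forall>i<m. (\<lambda>r c. par r x = c \<and> par r y = c) (fst p ! i) (snd p ! i)}"
    by (auto simp: gf2_par instances_def)
  also have "card \<dots> = card {(r::bool list,c). length r = n \<and> par r x = c \<and> par r y = c} ^ m" by (rule card_inst_level)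
  also have "{(r::bool list,c). length r = n \<and> par r x = c \<and> par r y = c}
       = (\<lambda>r. (r, par r x)) ` {r. length r = n \<and> par r x = par r y}" by auto
  also have "card \<dots> = 2^(n-1)" by (subst card_image) (auto intro: inj_onI simp: half assms)
  finally show ?thesis .
qed

lemma card_S: "card {x. length x = n \<and> hweight x \<le> k} = numF n k"
proof -
  let ?g = "\<lambda>x. {j. j < length x \<and> x!j}"
  have bij: "bij_betw ?g {x. length x = n \<and> hweight x \<le> k} {B. B \<subseteq> {..<n} \<and> card B \<le> k}"
  proof (rule bij_betw_byWitness[where f' = "\<lambda>B. map (\<lambda>j. j \<in> B) [0..<n]"])
    show "\<forall>a\<in>{x. length x = n \<and> hweight x \<le> k}. map (\<lambda>j. j \<in> ?g a) [0..<n] = a"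
      by (auto intro: nth_equalityI)
    show "\<forall>a'\<in>{B. B \<subseteq> {..<n} \<and> card B \<le> k}. ?g (map (\<lambda>j. j \<in> a') [0..<n]) = a'"
      by auto
    show "?g ` {x. length x = n \<and> hweight x \<le> k} \<subseteq> {B. B \<subseteq> {..<n} \<and> card B \<le> k}"
      by (auto simp: hweight_def length_filter_conv_card)
    have e: "B \<subseteq> {..<n} \<Longrightarrow> {i. i < n \<and> map (\<lambda>j. j\<in>B) [0..<n] ! i} = B" for B by auto
    show "(\<lambda>B. map (\<lambda>j. j \<in> B) [0..<n]) ` {B. B \<subseteq> {..<n} \<and> card B \<le> k} \<subseteq> {x. length x = n \<and> hweight x \<le> k}"
      using e by (auto simp: hweight_def length_filter_conv_card)
  qed
  have "{B. B \<subseteq> {..<n} \<and> card B \<le> k} = (\<Union>w\<in>{0..k}. {B. B \<subseteq> {..<n} \<and> card B = w})" by auto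
  then have "card {B. B \<subseteq> {..<n} \<and> card B \<le> k} = (\<Sum>w=0..k. card {B. B \<subseteq> {..<n} \<and> card B = w})"
    by (simp, subst card_UN_disjoint) (auto intro: finite_subset[of _ "Pow {..<n}"])
  also have "\<dots> = numF n k" by (simp add: n_subsets numF_def)
  finally show ?thesis using bij_betw_same_card[OF bij] by simp
qed



lemma sum_ind: "finite A \<Longrightarrow> (\<Sum>a\<in>A. if Q a then 1 else 0 :: real) = real (card {a\<in>A. Q a})"
  using sum.inter_filter[of A "\<lambda>_. 1::real" Q] by simp

lemma count_bound:
  assumes n: "n \<ge> 1"
  shows "real (card {p \<in> instances m n. \<not> sat_inst n k (fst p) (snd p)})
     \<le> real (card (instances m n)) * 2^m / real (card {x. length x = n \<and> hweight x \<le> k})"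
proof -
  define S where "S = {x::bool list. length x = n \<and> hweight x \<le> k}"
  define I where "I = instances m n"
  define P where "P p x = gf2_solves (fst p) (snd p) x" for p x
  define X where "X p = (\<Sum>x\<in>S. if P p x then 1 else 0 :: real)" for p
  define T :: real where "T = (2^n)^m"
  define h :: real where "h = (2^(n-1))^m"
  define N where "N = real (card S)"
  define q :: real where "q = 2^m"
  have finS: "finite S" unfolding S_def by (rule finite_subset[OF _ finite_bool_lists[of n]]) auto
  have finI: "finite I" unfolding I_def by (rule finite_inst)
  have Tq: "T = q * h" unfolding T_def h_def q_def using n
    by (metis One_nat_def Suc_diff_le diff_Suc_1 power_Suc power_mult_distrib mult.commute)
  have cI: "real (card I) = T * q" unfolding I_def T_def q_def card_inst
    by (simp add: power_mult_distrib)
  have q0: "q > 0" unfolding q_def by simp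
  have h0: "h > 0" unfolding h_def by simp
  have sum1: "(\<Sum>p\<in>I. X p) = N * T"
  proof -
    have "(\<Sum>p\<in>I. X p) = (\<Sum>x\<in>S. \<Sum>p\<in>I. if P p x then 1 else 0)"
      unfolding X_def by (rule sum.swap)
    also have "\<dots> = (\<Sum>x\<in>S. T)"
    proof (rule sum.cong[OF refl])
      fix x assume "x \<in> S"
      then have "length x = n" by (simp add: S_def)
      then show "(\<Sum>p\<in>I. if P p x then 1 else 0) = T"
        using card_sol1[of x n m] by (simp add: sum_ind[OF finite_inst] finI P_def I_def T_def)
    qed
    finally show ?thesis by (simp add: N_def)
  qed
  have sum2: "(\<Sum>p\<in>I. (X p)^2) = N * T + N * (N - 1) * h"
  proof -
    have "(\<Sum>p\<in>I. (X p)^2) = (\<Sum>p\<in>I. \<Sum>x\<in>S. \<Sum>y\<in>S. if P p x \<and> P p y then 1 else 0)"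
      unfolding X_def power2_eq_square sum_product by (intro sum.cong refl) auto
    also have "\<dots> = (\<Sum>x\<in>S. \<Sum>p\<in>I. \<Sum>y\<in>S. if P p x \<and> P p y then 1 else 0)"
      by (rule sum.swap)
    also have "\<dots> = (\<Sum>x\<in>S. \<Sum>y\<in>S. \<Sum>p\<in>I. if P p x \<and> P p y then 1 else 0)"
      by (intro sum.cong refl sum.swap)
    also have "\<dots> = (\<Sum>x\<in>S. T + (N - 1) * h)"
    proof (rule sum.cong[OF refl])
      fix x assume x: "x \<in> S"
      have c: "(\<Sum>p\<in>I. if P p x \<and> P p y then 1 else 0) = (if y = x then T else h)" if y: "y \<in> S" for y
      proof (cases "y = x")
        case True
        then show ?thesis using x card_sol1[of x n m]
          by (simp add: sum_ind[OF finite_inst] finI P_def I_def T_def S_def)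
      next
        case False
        then show ?thesis using x y card_sol2[of x n y m]
          by (simp add: sum_ind[OF finite_inst] finI P_def I_def h_def S_def)
      qed
      have "(\<Sum>y\<in>S. \<Sum>p\<in>I. if P p x \<and> P p y then 1 else 0) = (\<Sum>y\<in>S. if y = x then T else h)"
        using c by (rule sum.cong[OF refl])
      also have "\<dots> = T + (\<Sum>y\<in>S-{x}. if y = x then T else h)"
        using sum.remove[OF finS x, of "\<lambda>y. if y = x then T else h"] by simp
      also have "(\<Sum>y\<in>S-{x}. if y = x then T else h) = (\<Sum>y\<in>S-{x}. h)"
        by (rule sum.cong) auto
      also have "\<dots> = (N - 1) * h"
      proof -
        have "card S \<ge> 1" using x finS by (metis One_nat_def Suc_leI card_gt_0_iff empty_iff)
        then show ?thesis using x finS by (simp add: N_def of_nat_diff)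
      qed
      finally show "(\<Sum>y\<in>S. \<Sum>p\<in>I. if P p x \<and> P p y then 1 else 0) = T + (N - 1) * h" .
    qed
    finally show ?thesis by (simp add: N_def algebra_simps)
  qed
  define Z where "Z = {p \<in> I. \<not> sat_inst n k (fst p) (snd p)}"
  define \<mu> where "\<mu> = N / q"
  have XZ: "X p = 0" if "p \<in> Z" for p
    using that unfolding X_def Z_def sat_inst_def P_def S_def by (auto intro!: sum.neutral)
  have ZI: "Z \<subseteq> I" unfolding Z_def by auto
  have "real (card Z) * \<mu>^2 = (\<Sum>p\<in>Z. (X p - \<mu>)^2)" using XZ by simp
  also have "\<dots> \<le> (\<Sum>p\<in>I. (X p - \<mu>)^2)" by (rule sum_mono2[OF finI ZI]) auto
  also have "(\<Sum>p\<in>I. (X p - \<mu>)^2) = (\<Sum>p\<in>I. (X p)^2 - (2*\<mu>) * X p + \<mu>^2)"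
    by (intro sum.cong) (auto simp: power2_diff)
  also have "\<dots> = (\<Sum>p\<in>I. (X p)^2) - (2*\<mu>)*(\<Sum>p\<in>I. X p) + real (card I) * \<mu>^2"
    by (simp only: sum.distrib sum_subtractf sum_distrib_left) simp
  also have "\<dots> = N * T + N * (N - 1) * h - 2*\<mu>*(N*T) + T * q * \<mu>^2" using sum1 sum2 cI by simp
  also have "\<dots> = N * q * h - N * h" unfolding \<mu>_def Tq using q0
    by (simp add: field_simps power2_eq_square)
  also have "\<dots> \<le> N * q * h" using h0 by (simp add: N_def)
  finally have A: "real (card Z) * \<mu>^2 \<le> N * q * h" .
  show ?thesis
  proof -
    have "replicate n False \<in> S" by (simp add: S_def hweight_def)
    then have N0: "N > 0" using finS by (simp add: N_def card_gt_0_iff) blast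
    from A have "real (card Z) * N^2 \<le> N * q * h * q^2" unfolding \<mu>_def using q0
      by (simp add: field_simps power2_eq_square)
    then have "real (card Z) * N \<le> q * h * q^2" using N0
      by (simp add: power2_eq_square)
    then have "real (card Z) \<le> q * h * q^2 / N" using N0 by (simp add: field_simps)
    also have "q * h * q^2 / N = real (card I) * q / N" using cI Tq by (simp add: power2_eq_square algebra_simps)
    finally show ?thesis by (simp add: Z_def I_def q_def N_def S_def)
  qed
qed



lemma prob_bounds:
  assumes "n \<ge> 1"
  shows "prob_sat s n k \<le> 1"
    and "prob_sat s n k \<ge> 1 - 2 ^ (nat \<lceil>s * real n\<rceil>) / real (numF n k)"
proof -
  define m where "m = nat \<lceil>s * real n\<rceil>"
  define I where "I = instances m n"
  define Y where "Y = {p \<in> I. sat_inst n k (fst p) (snd p)}"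
  define Z where "Z = {p \<in> I. \<not> sat_inst n k (fst p) (snd p)}"
  have finI: "finite I" unfolding I_def by (rule finite_inst)
  have cI: "real (card I) > 0" unfolding I_def card_inst by simp
  have ps: "prob_sat s n k = real (card Y) / real (card I)"
  proof -
    have eq: "{(A, b) \<in> I. sat_inst n k A b} = Y" by (auto simp: Y_def)
    show ?thesis unfolding prob_sat_def Let_def m_def[symmetric] I_def[symmetric] eq ..
  qed
  have "Z = I - Y" by (auto simp: Z_def Y_def)
  then have "card Z = card I - card Y" using finI by (simp add: card_Diff_subset Y_def finite_subset)
  moreover have "card Y \<le> card I" using finI by (simp add: Y_def card_mono)
  ultimately have split: "real (card Y) = real (card I) - real (card Z)" by simp
  show "prob_sat s n k \<le> 1" unfolding ps using cI split by simp
  have cb: "real (card Z) \<le> real (card I) * 2^m / real (numF n k)"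
    using count_bound[OF assms, of m k] by (simp add: Z_def I_def card_S)
  have "real (card Z) / real (card I) \<le> 2^m / real (numF n k)"
    using cb cI by (simp add: field_simps)
  then show "prob_sat s n k \<ge> 1 - 2 ^ (nat \<lceil>s * real n\<rceil>) / real (numF n k)"
    unfolding ps split m_def[symmetric] using cI by (simp add: diff_divide_distrib)
qed



lemma numF_pos: "real (numF n k) \<ge> 1"
  unfolding numF_def by (simp add: sum.atLeast_Suc_atMost[of 0 k] del: of_nat_sum)

theorem mainTheorem2:
  fixes s :: real and k :: "nat \<Rightarrow> nat" and \<delta> :: real
  assumes "s \<ge> 0"
    and "\<forall>n\<ge>2. 2 \<le> k n \<and> k n \<le> n"
    and "\<delta> > 0"
    and "eventually (\<lambda>n. s \<le> log 2 (real (numF n (k n))) / real n - \<delta>) sequentially"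
  shows "(\<lambda>n. prob_sat s n (k n)) \<longlonglongrightarrow> 1"
proof -
  define r :: real where "r = 2 powr (-\<delta>)"
  have r0: "0 < r" "r < 1" unfolding r_def using assms(3) by (auto intro: powr_less_one)
  have lim: "(\<lambda>n. 1 - 2 * r^n) \<longlonglongrightarrow> 1"
    using tendsto_diff[OF tendsto_const tendsto_mult[OF tendsto_const LIMSEQ_power_zero[of r]], of 1 2] r0
    by simp
  have ev: "eventually (\<lambda>n. 1 - 2 * r^n \<le> prob_sat s n (k n)) sequentially"
    using assms(4) eventually_ge_at_top[of "1::nat"]
  proof eventually_elim
    case (elim n)
    define N where "N = real (numF n (k n))"
    define m where "m = nat \<lceil>s * real n\<rceil>"
    have N1: "N \<ge> 1" unfolding N_def by (rule numF_pos)
    have n0: "real n > 0" using elim by simp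
    have "s + \<delta> \<le> log 2 N / real n" using elim by (simp add: N_def)
    then have "real n * (s + \<delta>) \<le> log 2 N" using n0 by (simp add: field_simps)
    then have "2 powr (real n * (s + \<delta>)) \<le> 2 powr (log 2 N)" by simp
    then have Nb: "2 powr (real n * (s + \<delta>)) \<le> N" using N1 by simp
    have "real m \<le> s * real n + 1" unfolding m_def using assms(1) by simp
    then have "(2::real)^m \<le> 2 powr (s * real n + 1)"
      by (metis powr_realpow powr_le_cancel_iff one_less_numeral_iff semiring_norm(76) zero_less_numeral)
    then have "(2::real)^m / N \<le> 2 powr (s * real n + 1) / 2 powr (real n * (s + \<delta>))"
      using Nb N1 by (intro frac_le) auto
    also have "\<dots> = 2 powr (s * real n + 1 - real n * (s + \<delta>))" by (simp add: powr_diff)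
    also have "s * real n + 1 - real n * (s + \<delta>) = 1 + (-\<delta>) * real n" by (simp add: algebra_simps)
    also have "2 powr (1 + (-\<delta>) * real n) = 2 * r^n"
    proof -
      have "2 powr (1 + (-\<delta>) * real n) = 2 powr 1 * 2 powr ((-\<delta>) * real n)" by (rule powr_add)
      also have "2 powr ((-\<delta>) * real n) = (2 powr (-\<delta>)) powr real n" by (simp add: powr_powr)
      also have "\<dots> = r^n" unfolding r_def by (rule powr_realpow) simp
      finally show ?thesis by simp
    qed
    finally have "(2::real)^m / N \<le> 2 * r^n" .
    moreover have "prob_sat s n (k n) \<ge> 1 - 2^m / N"
      using prob_bounds(2)[of n s "k n"] elim by (simp add: m_def N_def)
    ultimately show ?case by simp
  qed
  have ev2: "eventually (\<lambda>n. prob_sat s n (k n) \<le> 1) sequentially"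
    using eventually_ge_at_top[of "1::nat"] by eventually_elim (rule prob_bounds(1))
  show ?thesis by (rule tendsto_sandwich[OF ev ev2 lim tendsto_const])
qed

end
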